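(* Let $h>0$, assume $g$ satisfies (H), fix $c>0$, and let $\phi,\psi$ be two wavefront profiles of (1) with the same velocity $c$. If there is a finite $T$ such that $\phi(t)<\psi(t)$ for all $t<T$, then $\phi(t)<\psi(t)$ for all $t\in\mathbb{R}$.
   Context: Hypothesis (H): $g:\mathbb{R}_+\to\mathbb{R}_+$ is continuous and strictly increasing; $g(x)=x$ has exactly two nonnegative solutions $0$ and $\kappa>0$; $g$ is differentiable at $0,\kappa$ with $g'(0)>1$, $g'(\kappa)<1$; $g$ is $C^1$ near $\kappa$; and $|g(u)/u-g'(0)|\le Cu^\theta$ for $u\in(0,\delta]$ for some $C>0,\theta\in(0,1],\delta>0$. A wavefront profile with velocity $c$ is a $C^2$, positive, bounded, monotone function $\phi:\mathbb{R}\to\mathbb{R}$ with $\phi(-\infty)=0$, $\phi(+\infty)=\kappa$ and $\phi''(s)-c\phi'(s)-\phi(s)+g(\phi(s-ch))=0$ for all $s\in\mathbb{R}$ (so that $\phi(\nu\cdot x+ct)$ solves $u_t=\Delta u-u+g(u(t-h,x))$). *)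

theory Defs
  imports "HOL-Analysis.Analysis"
begin

definition hypH :: "(real \<Rightarrow> real) \<Rightarrow> real \<Rightarrow> bool" where
  "hypH g \<kappa> \<longleftrightarrow>
     (\<forall>x\<ge>0. g x \<ge> 0) \<and>
     continuous_on {0..} g \<and>
     strict_mono_on {0..} g \<and>
     \<kappa> > 0 \<and>
     {x. x \<ge> 0 \<and> g x = x} = {0, \<kappa>} \<and>
     (\<exists>g0 gk. (g has_real_derivative g0) (at 0 within {0..}) \<and> g0 > 1 \<and>
        (g has_real_derivative gk) (at \<kappa>) \<and> gk < 1 \<and>
        (\<exists>C \<theta> \<delta>. C > 0 \<and> 0 < \<theta> \<and> \<theta> \<le> 1 \<and> \<delta> > 0 \<and>
           (\<forall>u. 0 < u \<and> u \<le> \<delta> \<longrightarrow> \<bar>g u / u - g0\<bar> \<le> C * u powr \<theta>))) \<and>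
     (\<exists>\<epsilon>>0. \<exists>g'. (\<forall>x\<in>ball \<kappa> \<epsilon>. (g has_real_derivative g' x) (at x)) \<and>
        continuous_on (ball \<kappa> \<epsilon>) g')"

text \<open>Wavefront profile with velocity c for u_t = Delta u - u + g(u(t-h,x)).\<close>
definition wavefront :: "(real \<Rightarrow> real) \<Rightarrow> real \<Rightarrow> real \<Rightarrow> real \<Rightarrow> (real \<Rightarrow> real) \<Rightarrow> bool" where
  "wavefront g \<kappa> h c \<phi> \<longleftrightarrow>
     (\<exists>\<phi>1 \<phi>2. (\<forall>s. (\<phi> has_real_derivative \<phi>1 s) (at s)) \<and>
              (\<forall>s. (\<phi>1 has_real_derivative \<phi>2 s) (at s)) \<and>
              continuous_on UNIV \<phi>2 \<and>
              (\<forall>s. \<phi>2 s - c * \<phi>1 s - \<phi> s + g (\<phi> (s - c * h)) = 0)) \<and>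
     (\<forall>s. \<phi> s > 0) \<and>
     bounded (range \<phi>) \<and>
     mono \<phi> \<and>
     (\<phi> \<longlongrightarrow> 0) at_bot \<and>
     (\<phi> \<longlongrightarrow> \<kappa>) at_top"

end

theory Submission
  imports Defs
begin

lemma min2:
  fixes f f1 f2 :: "real \<Rightarrow> real"
  assumes d1: "\<forall>s. (f has_real_derivative f1 s) (at s)"
    and d2: "\<forall>s. (f1 has_real_derivative f2 s) (at s)"
    and mn: "\<forall>y. f x \<le> f y"
  shows "f1 x = 0 \<and> f2 x \<ge> 0"
proof -
  have z: "f1 x = 0" 
  proof -
    have "(f has_real_derivative f1 x) (at x)" using d1 by blast
    moreover have "\<forall>y. \<bar>x - y\<bar> < 1 \<longrightarrow> f x \<le> f y" using mn by blast
    ultimately show ?thesis using DERIV_local_min[where f=f and x=x and l="f1 x" and d=1] by simp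
  qed
  have "f2 x \<ge> 0"
  proof (rule ccontr)
    assume "\<not> f2 x \<ge> 0"
    then have neg: "f2 x < 0" by simp
    have "(f1 has_real_derivative f2 x) (at x)" using d2 by blast
    from DERIV_neg_dec_right[OF this neg] obtain d where d: "d > 0" "\<forall>h>0. h < d \<longrightarrow> f1 x > f1 (x + h)"
      by blast
    have lt: "x < x + d/2" using d(1) by simp
    have der: "\<And>t. x \<le> t \<Longrightarrow> t \<le> x + d/2 \<Longrightarrow> DERIV f t :> f1 t" using d1 by blast
    obtain z where zz: "x < z" "z < x + d/2" "f (x + d/2) - f x = (x + d/2 - x) * f1 z"
      using MVT2[OF lt der] by blast
    have "f1 z < 0" using d(2)[rule_format, of "z - x"] zz z by auto
    then have "(x + d/2 - x) * f1 z < 0" using d(1) by (simp add: mult_pos_neg)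
    then have "f (x + d/2) < f x" using zz(3) by linarith
    then show False using mn by (meson not_le)
  qed
  with z show ?thesis by simp
qed

lemma g_props:
  assumes "hypH g \<kappa>"
  shows "\<And>x y. 0 \<le> x \<Longrightarrow> x \<le> y \<Longrightarrow> g x \<le> g y"
    and "\<And>x y. 0 \<le> x \<Longrightarrow> 0 \<le> y \<Longrightarrow> g x = g y \<Longrightarrow> x = y"
    and "g \<kappa> = \<kappa>" and "\<kappa> > 0"
proof -
  have sm: "strict_mono_on {0..} g" and k: "\<kappa> > 0" and fx: "{x. x \<ge> 0 \<and> g x = x} = {0, \<kappa>}"
    using assms unfolding hypH_def by auto
  show "\<And>x y. 0 \<le> x \<Longrightarrow> x \<le> y \<Longrightarrow> g x \<le> g y"
    using sm unfolding strict_mono_on_def by (metis atLeast_iff order.trans order_le_less)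
  show "\<And>x y. 0 \<le> x \<Longrightarrow> 0 \<le> y \<Longrightarrow> g x = g y \<Longrightarrow> x = y"
    using sm unfolding strict_mono_on_def by (metis atLeast_iff less_irrefl linorder_neqE_linordered_idom)
  have "\<kappa> \<in> {x. x \<ge> 0 \<and> g x = x}" using fx by auto
  then show "g \<kappa> = \<kappa>" by auto
  show "\<kappa> > 0" by (rule k)
qed

lemma lip:
  assumes "hypH g \<kappa>"
  shows "\<exists>e>0. \<exists>L. 0 \<le> L \<and> L < 1 \<and> (\<forall>x y. \<kappa> - e \<le> y \<longrightarrow> y \<le> x \<longrightarrow> x \<le> \<kappa> \<longrightarrow> g x - g y \<le> L * (x - y))"
proof -
  obtain gk where gk: "(g has_real_derivative gk) (at \<kappa>)" "gk < 1"
    using assms unfolding hypH_def by blast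
  obtain \<epsilon> g' where e: "\<epsilon> > 0" "\<forall>x\<in>ball \<kappa> \<epsilon>. (g has_real_derivative g' x) (at x)"
    "continuous_on (ball \<kappa> \<epsilon>) g'"
    using assms unfolding hypH_def by blast
  have gkk: "g' \<kappa> = gk" using DERIV_unique[where f=g and x=\<kappa> and D="g' \<kappa>" and E=gk] e(1,2) gk(1) by simp
  have "isCont g' \<kappa>" using e continuous_on_eq_continuous_at[of "ball \<kappa> \<epsilon>" g'] by auto
  then have lim: "g' \<midarrow>\<kappa>\<rightarrow> g' \<kappa>" unfolding isCont_def .
  have "(1 - gk)/2 > 0" using gk(2) by simp
  from LIM_D[OF lim this] obtain s where s: "s > 0" "\<forall>x. x \<noteq> \<kappa> \<and> norm (x - \<kappa>) < s \<longrightarrow> norm (g' x - g' \<kappa>) < (1 - gk)/2"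
    by blast
  define L where "L = max 0 ((gk + 1)/2)"
  define e1 where "e1 = min s \<epsilon> / 2"
  have bd: "g' x \<le> L" if "\<bar>x - \<kappa>\<bar> < s" for x
  proof (cases "x = \<kappa>")
    case True then show ?thesis using gkk L_def gk(2) by (auto simp: le_max_iff_disj)
  next
    case False
    then have "\<bar>g' x - g' \<kappa>\<bar> < (1 - gk)/2" using s(2)[rule_format, of x] that by auto
    then have "g' x - gk < (1 - gk)/2" using gkk abs_less_iff by metis
    then have "g' x \<le> (gk + 1)/2" by argo
    then show ?thesis using L_def by (simp add: le_max_iff_disj)
  qed
  have "g x - g y \<le> L * (x - y)" if "\<kappa> - e1 \<le> y" "y \<le> x" "x \<le> \<kappa>" for x y
  proof (cases "y = x")
    case True then show ?thesis by simp
  next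
    case False
    have inb: "\<bar>t - \<kappa>\<bar> < s \<and> t \<in> ball \<kappa> \<epsilon>" if "y \<le> t" "t \<le> x" for t
      using that \<open>\<kappa> - e1 \<le> y\<close> \<open>x \<le> \<kappa>\<close> e1_def s(1) e(1) by (auto simp: dist_real_def)
    have der: "\<And>t. y \<le> t \<Longrightarrow> t \<le> x \<Longrightarrow> DERIV g t :> g' t" using inb e(2) by blast
    have yx: "y < x" using False that by simp
    obtain z where z: "y < z" "z < x" "g x - g y = (x - y) * g' z"
      using MVT2[OF yx der] by blast
    have "g' z \<le> L" using bd inb z by auto
    then show ?thesis using z that by (simp add: mult.commute mult_left_mono)
  qed
  moreover have "e1 > 0" using e1_def s e by auto
  moreover have "0 \<le> L" "L < 1" using L_def gk by auto
  ultimately show ?thesis by blast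
qed

lemma deriv_cont:
  fixes f f1 :: "real \<Rightarrow> real"
  assumes "\<forall>s. (f has_real_derivative f1 s) (at s)"
  shows "continuous_on S f"
  by (meson DERIV_isCont assms continuous_at_imp_continuous_on)

lemma wf_le:
  assumes "wavefront g \<kappa> h c \<phi>"
  shows "\<phi> t \<le> \<kappa>"
proof -
  have top: "(\<phi> \<longlongrightarrow> \<kappa>) at_top" and mo: "mono \<phi>" using assms unfolding wavefront_def by auto
  have "\<forall>\<^sub>F s in at_top. \<phi> t \<le> \<phi> s"
    using eventually_ge_at_top[of t] by eventually_elim (use mo in \<open>auto simp: mono_def\<close>)
  then show ?thesis using tendsto_lowerbound[OF top] by auto
qed

lemma wf_lt:
  assumes hH: "hypH g \<kappa>" and hc: "h > 0" "c > 0" and wf: "wavefront g \<kappa> h c \<phi>"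
  shows "\<phi> t < \<kappa>"
proof (rule ccontr)
  note gp = g_props[OF hH]
  from wf obtain \<phi>1 \<phi>2 where pd1: "\<forall>s. (\<phi> has_real_derivative \<phi>1 s) (at s)"
    and pd2: "\<forall>s. (\<phi>1 has_real_derivative \<phi>2 s) (at s)"
    and peq: "\<forall>s. \<phi>2 s - c * \<phi>1 s - \<phi> s + g (\<phi> (s - c * h)) = 0"
    unfolding wavefront_def by blast
  have ppos: "\<forall>s. \<phi> s > 0" and pmono: "mono \<phi>" and pbot: "(\<phi> \<longlongrightarrow> 0) at_bot"
    using wf unfolding wavefront_def by auto
  have ple: "\<And>t. \<phi> t \<le> \<kappa>" using wf_le[OF wf] .
  assume "\<not> \<phi> t < \<kappa>"
  then have "\<phi> t = \<kappa>" using ple[of t] by simp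
  define S where "S = {s. \<phi> s = \<kappa>}"
  have Sne: "S \<noteq> {}" using \<open>\<phi> t = \<kappa>\<close> S_def by auto
  have "\<forall>\<^sub>F s in at_bot. \<phi> s < \<kappa>" using order_tendstoD(2)[OF pbot] gp(4) by simp
  then obtain N where N: "\<forall>s\<le>N. \<phi> s < \<kappa>" by (auto simp: eventually_at_bot_linorder)
  have bdd: "bdd_below S" unfolding bdd_below_def S_def
    using N by (metis less_irrefl mem_Collect_eq nle_le)
  have cl: "closed S" unfolding S_def
    by (rule closed_Collect_eq) (auto intro: deriv_cont[OF pd1])
  define t0 where "t0 = Inf S"
  have t0S: "t0 \<in> S" using closed_contains_Inf[OF Sne bdd cl] t0_def by simp
  have after: "\<phi> y = \<kappa>" if "y \<ge> t0" for y
    using pmono t0S S_def ple[of y] that by (auto simp: mono_def intro: antisym)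
  have d1z: "\<phi>1 y = 0" if "y > t0" for y
  proof -
    have "(\<phi> has_real_derivative \<phi>1 y) (at y)" using pd1 by blast
    moreover have "\<forall>z. \<bar>y - z\<bar> < y - t0 \<longrightarrow> \<phi> z \<le> \<phi> y" using after[of y] that ple by auto
    moreover have "0 < y - t0" using that by simp
    ultimately show ?thesis using DERIV_local_max[where f=\<phi> and x=y and l="\<phi>1 y" and d="y - t0"] by simp
  qed
  define s where "s = t0 + c * h / 2"
  have cp: "c * h > 0" using hc by simp
  have st: "s > t0" using cp s_def by simp
  have d2z: "\<phi>2 s = 0"
  proof -
    have "(\<phi>1 has_real_derivative \<phi>2 s) (at s)" using pd2 by blast
    moreover have "\<forall>z. \<bar>s - z\<bar> < s - t0 \<longrightarrow> \<phi>1 z \<le> \<phi>1 s" using d1z st by auto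
    moreover have "0 < s - t0" using st by simp
    ultimately show ?thesis using DERIV_local_max[where f=\<phi>1 and x=s and l="\<phi>2 s" and d="s - t0"] by simp
  qed
  have "g (\<phi> (s - c * h)) = \<kappa>" using peq[rule_format, of s] d2z d1z[OF st] after[of s] st by simp
  then have "g (\<phi> (s - c * h)) = g \<kappa>" using gp(3) by simp
  then have "\<phi> (s - c * h) = \<kappa>" using gp(2)[of "\<phi> (s - c * h)" \<kappa>] ppos gp(4) by (simp add: less_imp_le)
  then have "s - c * h \<in> S" using S_def by simp
  then have "t0 \<le> s - c * h" using cInf_lower[OF _ bdd] t0_def by simp
  then show False using s_def cp by simp
qed

theorem mainTheorem4:
  fixes g \<phi> \<psi> :: "real \<Rightarrow> real" and \<kappa> h c T :: real
  assumes "h > 0" and "hypH g \<kappa>" and "c > 0"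
    and "wavefront g \<kappa> h c \<phi>" and "wavefront g \<kappa> h c \<psi>"
    and "\<forall>t<T. \<phi> t < \<psi> t"
  shows "\<forall>t. \<phi> t < \<psi> t"
proof -
  note gp = g_props[OF assms(2)]
  note hyp = assms(6)
  from assms(4) obtain \<phi>1 \<phi>2 where pd1: "\<forall>s. (\<phi> has_real_derivative \<phi>1 s) (at s)"
    and pd2: "\<forall>s. (\<phi>1 has_real_derivative \<phi>2 s) (at s)"
    and peq: "\<forall>s. \<phi>2 s - c * \<phi>1 s - \<phi> s + g (\<phi> (s - c * h)) = 0"
    unfolding wavefront_def by blast
  have ppos: "\<forall>s. \<phi> s > 0" and pmono: "mono \<phi>" and ptop: "(\<phi> \<longlongrightarrow> \<kappa>) at_top"
    using assms(4) unfolding wavefront_def by auto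
  from assms(5) obtain \<psi>1 \<psi>2 where qd1: "\<forall>s. (\<psi> has_real_derivative \<psi>1 s) (at s)"
    and qd2: "\<forall>s. (\<psi>1 has_real_derivative \<psi>2 s) (at s)"
    and qeq: "\<forall>s. \<psi>2 s - c * \<psi>1 s - \<psi> s + g (\<psi> (s - c * h)) = 0"
    unfolding wavefront_def by blast
  have qpos: "\<forall>s. \<psi> s > 0" and qmono: "mono \<psi>" and qtop: "(\<psi> \<longlongrightarrow> \<kappa>) at_top"
    using assms(5) unfolding wavefront_def by auto
  have qmo: "\<psi> x \<le> \<psi> y" if "x \<le> y" for x y using qmono that by (simp add: mono_def)
  have pmo: "\<phi> x \<le> \<phi> y" if "x \<le> y" for x y using pmono that by (simp add: mono_def)
  have qcont: "continuous_on S \<psi>" for S using deriv_cont[OF qd1] .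
  have pcont: "continuous_on S \<phi>" for S using deriv_cont[OF pd1] .
  have ple: "\<And>t. \<phi> t \<le> \<kappa>" using wf_le[OF assms(4)] .
  have qle: "\<And>t. \<psi> t \<le> \<kappa>" using wf_le[OF assms(5)] .
  have plt: "\<And>t. \<phi> t < \<kappa>" using wf_lt[OF assms(2) assms(1) assms(3) assms(4)] .
  obtain e L where eL: "e > 0" "0 \<le> L" "L < 1"
    "\<forall>x y. \<kappa> - e \<le> y \<longrightarrow> y \<le> x \<longrightarrow> x \<le> \<kappa> \<longrightarrow> g x - g y \<le> L * (x - y)"
    using lip[OF assms(2)] by blast
  have ev1: "\<forall>\<^sub>F t in at_top. \<kappa> - e < \<phi> t" using order_tendstoD(1)[OF ptop] eL(1) by simp
  have ev2: "\<forall>\<^sub>F t in at_top. \<kappa> - e < \<psi> t" using order_tendstoD(1)[OF qtop] eL(1) by simp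
  have "\<forall>\<^sub>F t in at_top. \<kappa> - e \<le> \<phi> t \<and> \<kappa> - e \<le> \<psi> t" using ev1 ev2 by eventually_elim auto
  then obtain R where R: "\<forall>t\<ge>R. \<kappa> - e \<le> \<phi> t \<and> \<kappa> - e \<le> \<psi> t"
    by (auto simp: eventually_at_top_linorder)
  define T' where "T' = max T (R + c * h)"
  have cp: "c * h > 0" using assms(1,3) by simp
  have key: "\<psi>2 (s + a) - \<phi>2 s = c * (\<psi>1 (s + a) - \<phi>1 s) + (\<psi> (s + a) - \<phi> s)
      - (g (\<psi> (s - c * h + a)) - g (\<phi> (s - c * h)))" for s a
  proof -
    have e1: "\<psi>2 (s + a) - c * \<psi>1 (s + a) - \<psi> (s + a) + g (\<psi> (s + a - c * h)) = 0" using qeq by blast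
    have e2: "\<phi>2 s - c * \<phi>1 s - \<phi> s + g (\<phi> (s - c * h)) = 0" using peq by blast
    have e3: "s + a - c * h = s - c * h + a" by simp
    show ?thesis using e1 e2 unfolding e3 by (simp add: right_diff_distrib)
  qed
  have wd1: "\<forall>s. ((\<lambda>t. \<psi> (t + a) - \<phi> t) has_real_derivative (\<psi>1 (s + a) - \<phi>1 s)) (at s)" for a
  proof
    fix s
    have "(\<psi> has_real_derivative \<psi>1 (s + a)) (at (s + a))" using qd1 by blast
    then have "((\<lambda>t. \<psi> (t + a)) has_real_derivative \<psi>1 (s + a)) (at s)" by (simp add: DERIV_shift)
    then show "((\<lambda>t. \<psi> (t + a) - \<phi> t) has_real_derivative (\<psi>1 (s + a) - \<phi>1 s)) (at s)"
      using pd1 by (intro DERIV_diff) auto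
  qed
  have wd2: "\<forall>s. ((\<lambda>t. \<psi>1 (t + a) - \<phi>1 t) has_real_derivative (\<psi>2 (s + a) - \<phi>2 s)) (at s)" for a
  proof
    fix s
    have "(\<psi>1 has_real_derivative \<psi>2 (s + a)) (at (s + a))" using qd2 by blast
    then have "((\<lambda>t. \<psi>1 (t + a)) has_real_derivative \<psi>2 (s + a)) (at s)" by (simp add: DERIV_shift)
    then show "((\<lambda>t. \<psi>1 (t + a) - \<phi>1 t) has_real_derivative (\<psi>2 (s + a) - \<phi>2 s)) (at s)"
      using pd2 by (intro DERIV_diff) auto
  qed
  have wcont: "continuous_on S (\<lambda>t. \<psi> (t + a) - \<phi> t)" for S a using deriv_cont[OF wd1] .

  (* extension to the right by a maximum principle near kappa *)
  have ext: "\<forall>t. \<phi> t \<le> \<psi> (t + a)" if a0: "a \<ge> 0" and lo: "\<forall>t\<le>T'. \<phi> t \<le> \<psi> (t + a)" for a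
  proof (rule ccontr)
    define w where "w t = \<psi> (t + a) - \<phi> t" for t
    assume "\<not> (\<forall>t. \<phi> t \<le> \<psi> (t + a))"
    then obtain t0 where t0: "w t0 < 0" by (auto simp: w_def not_le)
    have t0T: "T' < t0" using lo t0 unfolding w_def by (meson diff_ge_0_iff_ge not_le)
    have "filterlim (\<lambda>x. a + x) at_top at_top"
      by (rule filterlim_tendsto_add_at_top[OF tendsto_const filterlim_ident])
    from filterlim_compose[OF qtop this] have "((\<lambda>x. \<psi> (x + a)) \<longlongrightarrow> \<kappa>) at_top"
      by (simp add: add.commute)
    then have "(w \<longlongrightarrow> \<kappa> - \<kappa>) at_top" unfolding w_def using ptop by (intro tendsto_diff)
    then have wlim: "(w \<longlongrightarrow> 0) at_top" by simp
    have "\<forall>\<^sub>F t in at_top. w t0 < w t" using order_tendstoD(1)[OF wlim t0] .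
    then obtain R2 where R2: "\<forall>t\<ge>R2. w t0 < w t" by (auto simp: eventually_at_top_linorder)
    define K where "K = {T'..max R2 t0}"
    have wc: "continuous_on K w" unfolding w_def using wcont .
    have "K \<noteq> {}" using t0T K_def by auto
    then obtain s0 where s0K: "s0 \<in> K" and s0m: "\<forall>y\<in>K. w s0 \<le> w y"
      using continuous_attains_inf[OF compact_Icc _ wc[unfolded K_def]] K_def by blast
    have t0K: "t0 \<in> K" using t0T K_def by auto
    have ws0: "w s0 < 0" using s0m t0K t0 by force
    have gm: "\<forall>y. w s0 \<le> w y"
    proof
      fix y
      show "w s0 \<le> w y"
      proof (cases "y < T'")
        case True
        then have "w y \<ge> 0" using lo unfolding w_def by auto
        then show ?thesis using ws0 by simp
      next
        case False
        show ?thesis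
        proof (cases "y \<le> max R2 t0")
          case True then show ?thesis using False s0m K_def by auto
        next
          case False2: False
          then have "w t0 < w y" using R2 by auto
          moreover have "w s0 \<le> w t0" using s0m t0K by blast
          ultimately show ?thesis by simp
        qed
      qed
    qed
    have wd1': "\<forall>s. (w has_real_derivative (\<psi>1 (s + a) - \<phi>1 s)) (at s)" unfolding w_def using wd1 .
    from min2[OF wd1' wd2[of a] gm] have m1: "\<psi>1 (s0 + a) - \<phi>1 s0 = 0" and m2: "\<psi>2 (s0 + a) - \<phi>2 s0 \<ge> 0"
      by auto
    define x where "x = \<phi> (s0 - c * h)"
    define y where "y = \<psi> (s0 - c * h + a)"
    have keys: "0 \<le> w s0 - (g y - g x)" using key[of s0 a] m1 m2 unfolding w_def x_def y_def by simp
    have yx: "y < x"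
    proof (rule ccontr)
      assume "\<not> y < x"
      then have "g x \<le> g y" using gp(1)[of x y] ppos x_def by (simp add: less_imp_le)
      then show False using keys ws0 by simp
    qed
    have s0T: "T' \<le> s0" using s0K K_def by auto
    have "R \<le> s0 - c * h" using s0T T'_def by simp
    then have "\<kappa> - e \<le> \<psi> (s0 - c * h)" using R by blast
    moreover have "\<psi> (s0 - c * h) \<le> y" unfolding y_def using qmo a0 by simp
    ultimately have ye: "\<kappa> - e \<le> y" by simp
    have "g x - g y \<le> L * (x - y)" using eL(4) ye yx ple x_def by (simp add: less_imp_le)
    moreover have "x - y = - w (s0 - c * h)" unfolding w_def x_def y_def by simp
    moreover have "w s0 \<le> w (s0 - c * h)" using gm by blast
    ultimately have "g x - g y \<le> L * (- w s0)" using eL(2)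
      by (smt (verit, best) mult_left_mono)
    moreover have "- w s0 \<le> g x - g y" using keys by simp
    moreover have "L * (- w s0) < 1 * (- w s0)" using eL(3) ws0 by (intro mult_strict_right_mono) auto
    ultimately show False by simp
  qed

  have strict: "\<forall>t. \<phi> t < \<psi> (t + a)" if a0: "a \<ge> 0" and le: "\<forall>t. \<phi> t \<le> \<psi> (t + a)" for a
  proof (rule ccontr)
    define w where "w t = \<psi> (t + a) - \<phi> t" for t
    define Z where "Z = {t. w t = 0}"
    assume "\<not> (\<forall>t. \<phi> t < \<psi> (t + a))"
    then obtain t1 where "\<not> \<phi> t1 < \<psi> (t1 + a)" by blast
    then have "t1 \<in> Z" using le[rule_format, of t1] unfolding Z_def w_def by simp
    then have Zne: "Z \<noteq> {}" by blast
    have Zlow: "T \<le> z" if "z \<in> Z" for z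
    proof (rule ccontr)
      assume "\<not> T \<le> z"
      then have "\<phi> z < \<psi> z" using hyp by simp
      also have "\<psi> z \<le> \<psi> (z + a)" using qmo a0 by simp
      finally show False using that Z_def w_def by simp
    qed
    have bdd: "bdd_below Z" unfolding bdd_below_def using Zlow by blast
    have cl: "closed Z" unfolding Z_def w_def
      by (rule closed_Collect_eq) (auto intro: wcont)
    define z0 where "z0 = Inf Z"
    have z0Z: "z0 \<in> Z" using closed_contains_Inf[OF Zne bdd cl] z0_def by simp
    have gm: "\<forall>y. w z0 \<le> w y" using z0Z le unfolding Z_def w_def by auto
    have wd1': "\<forall>s. (w has_real_derivative (\<psi>1 (s + a) - \<phi>1 s)) (at s)" unfolding w_def using wd1 .
    from min2[OF wd1' wd2[of a] gm] have m1: "\<psi>1 (z0 + a) - \<phi>1 z0 = 0" and m2: "\<psi>2 (z0 + a) - \<phi>2 z0 \<ge> 0"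
      by auto
    define x where "x = \<phi> (z0 - c * h)"
    define y where "y = \<psi> (z0 - c * h + a)"
    have keys: "0 \<le> w z0 - (g y - g x)" using key[of z0 a] m1 m2 unfolding w_def x_def y_def by simp
    have wz: "w z0 = 0" using z0Z Z_def by simp
    have xy: "x \<le> y" using le x_def y_def by simp
    have "g x \<le> g y" using gp(1)[of x y] ppos x_def xy by (simp add: less_imp_le)
    then have "g x = g y" using keys wz by simp
    then have "x = y" using gp(2)[of x y] ppos qpos x_def y_def by (simp add: less_imp_le)
    then have "z0 - c * h \<in> Z" unfolding Z_def w_def x_def y_def by simp
    then have "z0 \<le> z0 - c * h" using cInf_lower[OF _ bdd] z0_def by simp
    then show False using cp by simp
  qed

  define A where "A = {a. 0 \<le> a \<and> (\<forall>t. \<phi> t \<le> \<psi> (t + a))}"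
  have "\<forall>\<^sub>F x in at_top. \<phi> T' < \<psi> x" using order_tendstoD(1)[OF qtop plt[of T']] .
  then obtain R3 where R3: "\<forall>x\<ge>R3. \<phi> T' < \<psi> x" by (auto simp: eventually_at_top_linorder)
  have below: "\<phi> t \<le> \<psi> (t + a)" if "t < T" "a \<ge> 0" for t a
  proof -
    have "\<phi> t < \<psi> t" using hyp that by simp
    also have "\<psi> t \<le> \<psi> (t + a)" using qmo that by simp
    finally show ?thesis by simp
  qed
  define a1 where "a1 = max 0 (R3 - T)"
  have a1A: "a1 \<in> A"
  proof -
    have "\<forall>t\<le>T'. \<phi> t \<le> \<psi> (t + a1)"
    proof (intro allI impI)
      fix t assume tT: "t \<le> T'"
      show "\<phi> t \<le> \<psi> (t + a1)"
      proof (cases "t < T")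
        case True then show ?thesis using below a1_def by simp
      next
        case False
        have "\<phi> t \<le> \<phi> T'" using pmo tT by simp
        also have "\<phi> T' < \<psi> (T + a1)" using R3 a1_def by simp
        also have "\<psi> (T + a1) \<le> \<psi> (t + a1)" using qmo False by simp
        finally show ?thesis by simp
      qed
    qed
    then show ?thesis using ext[of a1] a1_def A_def by simp
  qed
  have Ane: "A \<noteq> {}" using a1A by blast
  have bdd: "bdd_below A" unfolding bdd_below_def A_def by auto
  define as where "as = Inf A"
  have as0: "0 \<le> as" unfolding as_def using Ane by (intro cInf_greatest) (auto simp: A_def)
  have asA: "as \<in> A"
  proof -
    have "\<phi> t \<le> \<psi> (t + as)" for t
    proof (rule ccontr)
      assume "\<not> \<phi> t \<le> \<psi> (t + as)"
      then have r: "\<phi> t - \<psi> (t + as) > 0" by simp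
      have "isCont \<psi> (t + as)" using qd1 DERIV_isCont by blast
      then have lim: "\<psi> \<midarrow>(t + as)\<rightarrow> \<psi> (t + as)" unfolding isCont_def .
      from LIM_D[OF lim r] obtain d where d: "d > 0"
        "\<forall>x. x \<noteq> t + as \<and> norm (x - (t + as)) < d \<longrightarrow> norm (\<psi> x - \<psi> (t + as)) < \<phi> t - \<psi> (t + as)"
        by blast
      have "Inf A < as + d" using as_def d(1) by simp
      then obtain a where aA: "a \<in> A" and ad: "a < as + d" using cInf_lessD[OF Ane] by blast
      have "as \<le> a" using cInf_lower[OF aA bdd] as_def by simp
      have le: "\<phi> t \<le> \<psi> (t + a)" using aA A_def by simp
      show False
      proof (cases "a = as")
        case True then show ?thesis using le \<open>\<not> \<phi> t \<le> \<psi> (t + as)\<close> by simp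
      next
        case False
        then have "norm (\<psi> (t + a) - \<psi> (t + as)) < \<phi> t - \<psi> (t + as)"
          using d(2)[rule_format, of "t + a"] \<open>as \<le> a\<close> ad by auto
        then show False using le by (simp add: abs_less_iff)
      qed
    qed
    then show ?thesis using as0 A_def by simp
  qed
  have as_zero: "as = 0"
  proof (rule ccontr)
    assume "as \<noteq> 0"
    then have asp: "as > 0" using as0 by simp
    have st: "\<forall>t. \<phi> t < \<psi> (t + as)" using strict[of as] asA A_def by simp
    have TT: "T \<le> T'" using T'_def by simp
    have fc: "continuous_on {T..T'} (\<lambda>t. \<psi> (t + as) - \<phi> t)" using wcont .
    obtain tm where tm: "tm \<in> {T..T'}" "\<forall>y\<in>{T..T'}. \<psi> (tm + as) - \<phi> tm \<le> \<psi> (y + as) - \<phi> y"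
      using continuous_attains_inf[OF compact_Icc _ fc] TT by auto
    define m where "m = \<psi> (tm + as) - \<phi> tm"
    have mp: "m > 0" using st m_def by simp
    have "uniformly_continuous_on {T..T' + as} \<psi>"
      by (rule compact_uniformly_continuous[OF qcont compact_Icc])
    then obtain d where d: "d > 0" "\<forall>x\<in>{T..T' + as}. \<forall>x'\<in>{T..T' + as}. dist x' x < d \<longrightarrow> dist (\<psi> x') (\<psi> x) < m"
      unfolding uniformly_continuous_on_def using mp by metis
    define a2 where "a2 = max 0 (as - d/2)"
    have a20: "0 \<le> a2" and a2l: "a2 < as" and a2d: "as - a2 < d" using a2_def asp d(1) by auto
    have "\<forall>t\<le>T'. \<phi> t \<le> \<psi> (t + a2)"
    proof (intro allI impI)
      fix t assume tT: "t \<le> T'"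
      show "\<phi> t \<le> \<psi> (t + a2)"
      proof (cases "t < T")
        case True then show ?thesis using below a20 by simp
      next
        case False
        then have tI: "t \<in> {T..T'}" using tT by simp
        have i1: "t + a2 \<in> {T..T' + as}" using tI a20 a2l by auto
        have i2: "t + as \<in> {T..T' + as}" using tI as0 by auto
        have "dist (t + a2) (t + as) < d" using a2d a2l by (simp add: dist_real_def)
        then have "dist (\<psi> (t + a2)) (\<psi> (t + as)) < m" using d(2) i1 i2 by blast
        moreover have "m \<le> \<psi> (t + as) - \<phi> t" using tm(2) tI m_def by blast
        ultimately show ?thesis by (simp add: dist_real_def abs_less_iff)
      qed
    qed
    then have "a2 \<in> A" using ext[of a2] a20 A_def by simp
    then have "as \<le> a2" using cInf_lower[OF _ bdd] as_def by simp
    then show False using a2l by simp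
  qed
  have "0 \<in> A" using asA as_zero by simp
  then have "\<forall>t. \<phi> t < \<psi> (t + 0)" using strict[of 0] A_def by simp
  then show ?thesis by simp
qed

end
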